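(* Let $\pi$ be a measure on $\mathcal Y$ (extended by zero to $\mathbb Z$). The following are equivalent: (1) $\pi$ is a stationary measure (resp. stationary distribution) of $Y_t$ on $\mathcal Y$. (2) $\pi$ is a non-negative measure (resp. probability distribution) on $\mathcal Y$ such that for every $x\in\mathbb N_0$, $$\sum_{\omega\in\Omega_-}\ \sum_{j=\omega\omega_*^{-1}+1}^{0}\lambda_\omega(x-j\omega_* )\pi(x-j\omega_* )=\sum_{\omega\in\Omega_+}\ \sum_{j=1}^{\omega\omega_*^{-1}}\lambda_\omega(x-j\omega_* )\pi(x-j\omega_* )<\infty .$$ (3) $\pi$ is a non-negative measure (resp. probability distribution) on $\mathcal Y$ such that for every $x\in\mathbb N_0$, $$\sum_{j=\omega_-+1}^{0}\pi(x-j\omega_* )\sum_{\omega\in A_j}\lambda_\omega(x-j\omega_* )=\sum_{j=1}^{\omega_+}\pi(x-j\omega_* )\sum_{\omega\in A_j}\lambda_\omega(x-j\omega_* )<\infty .$$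
   Context: Let $(Y_t)_{t\ge0}$ be a minimal continuous-time Markov chain on a state space $\mathcal Y\subseteq\mathbb N_0$ with transition rate matrix $Q=(q_{x,y})_{x,y\in\mathcal Y}$ with finite entries. Let $\Omega=\{y-x: q_{x,y}>0\text{ for some }x,y\in\mathcal Y\}$ and $\lambda_\omega(x)=q_{x,x+\omega}$ for $x\in\mathcal Y$, $\omega\in\Omega$. Convention: functions defined on $\mathcal Y$ (such as $\lambda_\omega$ and measures $\pi$) are set to $0$ at points of $\mathbb Z\setminus\mathcal Y$. Let $\Omega_+=\{\omega\in\Omega:\omega>0\}$, $\Omega_-=\{\omega\in\Omega:\omega<0\}$, $\omega_*=\gcd(\Omega)>0$, $\omega_+=\max_{\omega\in\Omega_+}\omega/\omega_*$, $\omega_-=\min_{\omega\in\Omega_-}\omega/\omega_*$ (with $\max\varnothing=-\infty$, $\min\varnothing=+\infty$, and max/min equal to $\pm\infty$ if unbounded). For integers $j$ with $\omega_-\le j\le\omega_++1$ let $A_j=\{\omega\in\Omega_-: j\omega_*>\omega\}$ if $j\le0$ and $A_j=\{\omega\in\Omega_+: j\omega_*\le\omega\}$ if $j\ge1$. A stationary measure of $Y_t$ is a non-negative measure $\pi$ on $\mathcal Y$ satisfying the master equation $0=\sum_{\omega\in\Omega}\lambda_\omega(x-\omega)\pi(x-\omega)-\sum_{\omega\in\Omega}\lambda_\omega(x)\pi(x)$ for all $x\in\mathcal Y$; a stationary distribution is a stationary measure that is a probability measure. *)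

theory Defs
  imports "HOL-Analysis.Analysis"
begin

text \<open>States are integers; the state space Y is a subset of the non-negative integers.
  The rate matrix is q :: int => int => real, only its entries on Y x Y matter.\<close>

definition is_rate_matrix :: "int set \<Rightarrow> (int \<Rightarrow> int \<Rightarrow> real) \<Rightarrow> bool" where
  "is_rate_matrix Y q \<longleftrightarrow>
     (\<forall>x\<in>Y. \<forall>y\<in>Y. x \<noteq> y \<longrightarrow> 0 \<le> q x y) \<and>
     (\<forall>x\<in>Y. (q x) summable_on (Y - {x}) \<and> q x x = - (\<Sum>\<^sub>\<infinity>y\<in>Y - {x}. q x y))"

definition Omega :: "int set \<Rightarrow> (int \<Rightarrow> int \<Rightarrow> real) \<Rightarrow> int set" where
  "Omega Y q = {y - x | x y. x \<in> Y \<and> y \<in> Y \<and> q x y > 0}"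

definition Omega_plus :: "int set \<Rightarrow> (int \<Rightarrow> int \<Rightarrow> real) \<Rightarrow> int set" where
  "Omega_plus Y q = {\<omega> \<in> Omega Y q. \<omega> > 0}"

definition Omega_minus :: "int set \<Rightarrow> (int \<Rightarrow> int \<Rightarrow> real) \<Rightarrow> int set" where
  "Omega_minus Y q = {\<omega> \<in> Omega Y q. \<omega> < 0}"

definition lam :: "int set \<Rightarrow> (int \<Rightarrow> int \<Rightarrow> real) \<Rightarrow> int \<Rightarrow> int \<Rightarrow> real" where
  "lam Y q \<omega> x = (if x \<in> Y \<and> x + \<omega> \<in> Y then q x (x + \<omega>) else 0)"

definition omega_star :: "int set \<Rightarrow> (int \<Rightarrow> int \<Rightarrow> real) \<Rightarrow> int" where
  "omega_star Y q = Gcd (Omega Y q)"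

text \<open>omega_+ and omega_- as extended reals: Sup {} = -infinity, Inf {} = +infinity,
  and unbounded sets give +/- infinity.\<close>
definition omega_plus :: "int set \<Rightarrow> (int \<Rightarrow> int \<Rightarrow> real) \<Rightarrow> ereal" where
  "omega_plus Y q = (SUP \<omega>\<in>Omega_plus Y q. ereal (of_int \<omega> / of_int (omega_star Y q)))"

definition omega_minus :: "int set \<Rightarrow> (int \<Rightarrow> int \<Rightarrow> real) \<Rightarrow> ereal" where
  "omega_minus Y q = (INF \<omega>\<in>Omega_minus Y q. ereal (of_int \<omega> / of_int (omega_star Y q)))"

definition A_set :: "int set \<Rightarrow> (int \<Rightarrow> int \<Rightarrow> real) \<Rightarrow> int \<Rightarrow> int set" where
  "A_set Y q j = (if j \<le> 0 then {\<omega> \<in> Omega_minus Y q. j * omega_star Y q > \<omega>}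
                  else {\<omega> \<in> Omega_plus Y q. j * omega_star Y q \<le> \<omega>})"

definition nonneg_measure_on :: "int set \<Rightarrow> (int \<Rightarrow> real) \<Rightarrow> bool" where
  "nonneg_measure_on Y \<pi> \<longleftrightarrow> (\<forall>x. 0 \<le> \<pi> x) \<and> (\<forall>x. x \<notin> Y \<longrightarrow> \<pi> x = 0)"

definition prob_on :: "int set \<Rightarrow> (int \<Rightarrow> real) \<Rightarrow> bool" where
  "prob_on Y \<pi> \<longleftrightarrow> nonneg_measure_on Y \<pi> \<and> (\<Sum>\<^sub>\<infinity>x\<in>Y. ennreal (\<pi> x)) = 1"

text \<open>Master equation: inflow = outflow at every state of Y (sums of non-negative
  terms, taken in the extended non-negative reals; outflow is finite for a rate matrix).\<close>
definition stationary_measure :: "int set \<Rightarrow> (int \<Rightarrow> int \<Rightarrow> real) \<Rightarrow> (int \<Rightarrow> real) \<Rightarrow> bool" where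
  "stationary_measure Y q \<pi> \<longleftrightarrow> nonneg_measure_on Y \<pi> \<and>
     (\<forall>x\<in>Y. (\<Sum>\<^sub>\<infinity>\<omega>\<in>Omega Y q. ennreal (lam Y q \<omega> (x - \<omega>) * \<pi> (x - \<omega>)))
           = (\<Sum>\<^sub>\<infinity>\<omega>\<in>Omega Y q. ennreal (lam Y q \<omega> x * \<pi> x)))"

definition stationary_distribution :: "int set \<Rightarrow> (int \<Rightarrow> int \<Rightarrow> real) \<Rightarrow> (int \<Rightarrow> real) \<Rightarrow> bool" where
  "stationary_distribution Y q \<pi> \<longleftrightarrow> stationary_measure Y q \<pi> \<and> prob_on Y \<pi>"

definition cond2 :: "int set \<Rightarrow> (int \<Rightarrow> int \<Rightarrow> real) \<Rightarrow> (int \<Rightarrow> real) \<Rightarrow> bool" where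
  "cond2 Y q \<pi> \<longleftrightarrow> (\<forall>x::int. 0 \<le> x \<longrightarrow>
     (let s = omega_star Y q;
          L = (\<Sum>\<^sub>\<infinity>\<omega>\<in>Omega_minus Y q. \<Sum>\<^sub>\<infinity>j\<in>{\<omega> div s + 1..0}.
                 ennreal (lam Y q \<omega> (x - j * s) * \<pi> (x - j * s)));
          R = (\<Sum>\<^sub>\<infinity>\<omega>\<in>Omega_plus Y q. \<Sum>\<^sub>\<infinity>j\<in>{1..\<omega> div s}.
                 ennreal (lam Y q \<omega> (x - j * s) * \<pi> (x - j * s)))
      in L = R \<and> R < \<infinity>))"

definition cond3 :: "int set \<Rightarrow> (int \<Rightarrow> int \<Rightarrow> real) \<Rightarrow> (int \<Rightarrow> real) \<Rightarrow> bool" where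
  "cond3 Y q \<pi> \<longleftrightarrow> (\<forall>x::int. 0 \<le> x \<longrightarrow>
     (let s = omega_star Y q;
          L = (\<Sum>\<^sub>\<infinity>j\<in>{j::int. omega_minus Y q < ereal (of_int j) \<and> j \<le> 0}.
                 ennreal (\<pi> (x - j * s)) * (\<Sum>\<^sub>\<infinity>\<omega>\<in>A_set Y q j. ennreal (lam Y q \<omega> (x - j * s))));
          R = (\<Sum>\<^sub>\<infinity>j\<in>{j::int. 1 \<le> j \<and> ereal (of_int j) \<le> omega_plus Y q}.
                 ennreal (\<pi> (x - j * s)) * (\<Sum>\<^sub>\<infinity>\<omega>\<in>A_set Y q j. ennreal (lam Y q \<omega> (x - j * s))))
      in L = R \<and> R < \<infinity>))"

end

theory Submission
  imports Defs
begin

lemma ennreal_summ: "(f :: 'a \<Rightarrow> ennreal) summable_on A"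
  by (rule nonneg_summable_on_complete) simp

lemma ennreal_sum_infsum:
  fixes f :: "'a \<Rightarrow> 'b \<Rightarrow> ennreal"
  assumes "finite F"
  shows "(\<Sum>x\<in>F. \<Sum>\<^sub>\<infinity>y\<in>B. f x y) = (\<Sum>\<^sub>\<infinity>y\<in>B. \<Sum>x\<in>F. f x y)"
  using assms
proof (induction F rule: finite_induct)
  case empty then show ?case by simp
next
  case (insert a F)
  have "(\<Sum>\<^sub>\<infinity>y\<in>B. \<Sum>x\<in>insert a F. f x y) = (\<Sum>\<^sub>\<infinity>y\<in>B. f a y + (\<Sum>x\<in>F. f x y))"
    using insert.hyps by simp
  also have "\<dots> = (\<Sum>\<^sub>\<infinity>y\<in>B. f a y) + (\<Sum>\<^sub>\<infinity>y\<in>B. \<Sum>x\<in>F. f x y)"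
    by (rule infsum_add) (rule ennreal_summ)+
  finally show ?case using insert by simp
qed

lemma ennreal_infsum_cmult:
  fixes f :: "'a \<Rightarrow> ennreal"
  assumes c: "c < \<infinity>"
  shows "infsum (\<lambda>x. c * f x) A = c * infsum f A"
proof -
  have "(f has_sum infsum f A) A" by (rule has_sum_infsum) (rule ennreal_summ)
  then have "(sum f \<longlongrightarrow> infsum f A) (finite_subsets_at_top A)" by (simp add: has_sum_def)
  then have "((\<lambda>F. c * sum f F) \<longlongrightarrow> c * infsum f A) (finite_subsets_at_top A)"
    using c by (intro ennreal_tendsto_cmult) simp_all
  then have "((\<lambda>x. c * f x) has_sum (c * infsum f A)) A"
    by (simp add: has_sum_def sum_distrib_left)
  then show ?thesis by (rule infsumI)
qed

lemma ennreal_finsum_le: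
  fixes f :: "'a \<Rightarrow> ennreal"
  assumes "finite F" "F \<subseteq> A"
  shows "sum f F \<le> infsum f A"
proof -
  have "sum f F = infsum f F" using assms by simp
  also have "\<dots> \<le> infsum f A"
    by (rule infsum_mono_neutral) (use assms in \<open>auto simp: ennreal_summ\<close>)
  finally show ?thesis .
qed

lemma ennreal_infsum_swap_le:
  fixes f :: "'a \<Rightarrow> 'b \<Rightarrow> ennreal"
  shows "(\<Sum>\<^sub>\<infinity>x\<in>A. \<Sum>\<^sub>\<infinity>y\<in>B. f x y) \<le> (\<Sum>\<^sub>\<infinity>y\<in>B. \<Sum>\<^sub>\<infinity>x\<in>A. f x y)"
proof -
  have "(\<Sum>\<^sub>\<infinity>x\<in>A. \<Sum>\<^sub>\<infinity>y\<in>B. f x y) = (SUP F\<in>{F. finite F \<and> F\<subseteq>A}. \<Sum>x\<in>F. \<Sum>\<^sub>\<infinity>y\<in>B. f x y)"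
    by (rule nonneg_infsum_complete) simp
  also have "\<dots> \<le> (\<Sum>\<^sub>\<infinity>y\<in>B. \<Sum>\<^sub>\<infinity>x\<in>A. f x y)"
  proof (rule SUP_least)
    fix F assume F: "F \<in> {F. finite F \<and> F\<subseteq>A}"
    have "(\<Sum>x\<in>F. \<Sum>\<^sub>\<infinity>y\<in>B. f x y) = (\<Sum>\<^sub>\<infinity>y\<in>B. \<Sum>x\<in>F. f x y)"
      using F by (simp add: ennreal_sum_infsum)
    also have "\<dots> \<le> (\<Sum>\<^sub>\<infinity>y\<in>B. \<Sum>\<^sub>\<infinity>x\<in>A. f x y)"
      by (rule infsum_mono) (use F in \<open>auto simp: ennreal_summ intro: ennreal_finsum_le\<close>)
    finally show "(\<Sum>x\<in>F. \<Sum>\<^sub>\<infinity>y\<in>B. f x y) \<le> (\<Sum>\<^sub>\<infinity>y\<in>B. \<Sum>\<^sub>\<infinity>x\<in>A. f x y)" .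
  qed
  finally show ?thesis .
qed

lemma ennreal_infsum_swap:
  fixes f :: "'a \<Rightarrow> 'b \<Rightarrow> ennreal"
  shows "(\<Sum>\<^sub>\<infinity>x\<in>A. \<Sum>\<^sub>\<infinity>y\<in>B. f x y) = (\<Sum>\<^sub>\<infinity>y\<in>B. \<Sum>\<^sub>\<infinity>x\<in>A. f x y)"
  by (rule antisym) (rule ennreal_infsum_swap_le)+

lemma ennreal_infsum_real:
  fixes f :: "'a \<Rightarrow> real"
  assumes "f summable_on A" "\<And>x. x\<in>A \<Longrightarrow> f x \<ge> 0"
  shows "(\<Sum>\<^sub>\<infinity>x\<in>A. ennreal (f x)) = ennreal (infsum f A)"
proof -
  have \<section>: "\<And>F. \<lbrakk>finite F; F \<subseteq> A\<rbrakk> \<Longrightarrow> sum (ennreal \<circ> f) F = ennreal (sum f F)"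
    by (metis (mono_tags, lifting) comp_def assms(2) subsetD sum.cong sum_ennreal)
  then have \<open>ennreal (infsum f A) = infsum (ennreal \<circ> f) A\<close>
    by (simp add: infsum_comm_additive_general assms(1))
  thus ?thesis by (simp add: o_def)
qed

lemma shift_sum:
  fixes g :: "int \<Rightarrow> 'b::comm_monoid_add"
  assumes "a \<le> b"
  shows "(\<Sum>j\<in>{a+1..b}. g (j-1)) + g b = g a + (\<Sum>j\<in>{a+1..b}. g j)"
  using assms
proof (induction b rule: int_ge_induct)
  case base
  then show ?case by simp
next
  case (step i)
  have e: "{a+1..i+1} = insert (i+1) {a+1..i}" using step.hyps by auto
  have "(\<Sum>j\<in>{a+1..i+1}. g (j-1)) + g (i+1) = ((\<Sum>j\<in>{a+1..i}. g (j-1)) + g i) + g (i+1)"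
    unfolding e by (simp add: add_ac)
  also have "\<dots> = g a + (\<Sum>j\<in>{a+1..i+1}. g j)" unfolding step.IH e by (simp add: add_ac)
  finally show ?case .
qed


locale mc =
  fixes Y :: "int set" and q :: "int \<Rightarrow> int \<Rightarrow> real" and \<pi> :: "int \<Rightarrow> real"
  assumes Ysub: "Y \<subseteq> {0..}" and rate: "is_rate_matrix Y q" and One: "Omega Y q \<noteq> {}"
    and nn: "nonneg_measure_on Y \<pi>"
begin

abbreviation "s \<equiv> omega_star Y q"
abbreviation "Om \<equiv> Omega Y q"
abbreviation "Op \<equiv> Omega_plus Y q"
abbreviation "Omm \<equiv> Omega_minus Y q"

definition h :: "int \<Rightarrow> int \<Rightarrow> ennreal" where "h \<omega> y = ennreal (lam Y q \<omega> y * \<pi> y)"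

lemma pi_nn: "0 \<le> \<pi> y" using nn by (simp add: nonneg_measure_on_def)
lemma pi_out: "y \<notin> Y \<Longrightarrow> \<pi> y = 0" using nn by (simp add: nonneg_measure_on_def)

lemma zero_notin: "0 \<notin> Om"
proof
  assume "0 \<in> Om"
  then obtain x where x: "x \<in> Y" "q x x > 0" unfolding Omega_def by auto
  have "(\<Sum>\<^sub>\<infinity>y\<in>Y - {x}. q x y) \<ge> 0"
    by (rule infsum_nonneg) (use rate x in \<open>auto simp: is_rate_matrix_def\<close>)
  moreover have "q x x = - (\<Sum>\<^sub>\<infinity>y\<in>Y - {x}. q x y)" using rate x by (simp add: is_rate_matrix_def)
  ultimately show False using x by simp
qed

lemma s_dvd: "\<omega> \<in> Om \<Longrightarrow> s dvd \<omega>"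
  unfolding omega_star_def by (rule Gcd_dvd)

lemma s_pos: "s > 0"
proof -
  have "s \<ge> 0" unfolding omega_star_def by simp
  moreover have "s \<noteq> 0" unfolding omega_star_def using One zero_notin
    by (metis Gcd_0_iff ex_in_conv insertE subsetD subset_singletonD)
  ultimately show ?thesis by simp
qed

lemma div_mult: "\<omega> \<in> Om \<Longrightarrow> \<omega> div s * s = \<omega>"
  using s_dvd by simp

lemma Omega_split: "Om = Op \<union> Omm" "Op \<inter> Omm = {}"
  using zero_notin unfolding Omega_plus_def Omega_minus_def by (auto simp: neq_iff) (metis linorder_neqE_linordered_idom)

lemma h_zero: "y \<notin> Y \<or> y + \<omega> \<notin> Y \<Longrightarrow> h \<omega> y = 0"
  unfolding h_def lam_def by auto

lemma neg_notin: "y < 0 \<Longrightarrow> y \<notin> Y" using Ysub by auto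


definition "Inf_in x = (\<Sum>\<^sub>\<infinity>\<omega>\<in>Om. h \<omega> (x - \<omega>))"
definition "Outf x = (\<Sum>\<^sub>\<infinity>\<omega>\<in>Om. h \<omega> x)"
definition "Rf x = (\<Sum>\<^sub>\<infinity>\<omega>\<in>Op. \<Sum>\<^sub>\<infinity>j\<in>{1..\<omega> div s}. h \<omega> (x - j * s))"
definition "Lf x = (\<Sum>\<^sub>\<infinity>\<omega>\<in>Omm. \<Sum>\<^sub>\<infinity>j\<in>{\<omega> div s + 1..0}. h \<omega> (x - j * s))"

lemma stat_iff: "stationary_measure Y q \<pi> \<longleftrightarrow> (\<forall>x. Inf_in x = Outf x)"
proof -
  have "Inf_in x = Outf x" if "x \<notin> Y" for x
  proof -
    have "Inf_in x = 0" unfolding Inf_in_def by (rule infsum_0) (use that in \<open>auto intro: h_zero\<close>)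
    moreover have "Outf x = 0" unfolding Outf_def by (rule infsum_0) (use that in \<open>auto intro: h_zero\<close>)
    ultimately show ?thesis by simp
  qed
  then show ?thesis using nn unfolding stationary_measure_def Inf_in_def Outf_def h_def by blast
qed

lemma cond2_iff: "cond2 Y q \<pi> \<longleftrightarrow> (\<forall>x\<ge>0. Lf x = Rf x \<and> Rf x < \<infinity>)"
  unfolding cond2_def Let_def Lf_def Rf_def h_def by simp

lemma Out_fin: "Outf x < \<infinity>"
proof (cases "x \<in> Y")
  case False
  have "Outf x = 0" unfolding Outf_def by (rule infsum_0) (use False in \<open>auto intro: h_zero\<close>)
  then show ?thesis by simp
next
  case True
  let ?S = "{\<omega>\<in>Om. x + \<omega> \<in> Y}"
  have "Outf x = (\<Sum>\<^sub>\<infinity>\<omega>\<in>?S. ennreal (q x (x + \<omega>) * \<pi> x))"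
    unfolding Outf_def h_def lam_def by (rule infsum_cong_neutral) (use True in auto)
  also have "\<dots> = (\<Sum>\<^sub>\<infinity>z\<in>(\<lambda>\<omega>. x + \<omega>) ` ?S. ennreal (q x z * \<pi> x))"
    by (subst infsum_reindex) (auto simp: inj_on_def o_def)
  also have "\<dots> \<le> (\<Sum>\<^sub>\<infinity>z\<in>Y - {x}. ennreal (q x z * \<pi> x))"
    by (rule infsum_mono_neutral) (use zero_notin in \<open>auto simp: ennreal_summ\<close>)
  also have "\<dots> = ennreal (\<Sum>\<^sub>\<infinity>z\<in>Y - {x}. q x z * \<pi> x)"
  proof (rule ennreal_infsum_real)
    show "(\<lambda>z. q x z * \<pi> x) summable_on Y - {x}"
      by (rule summable_on_cmult_left) (use rate True in \<open>simp add: is_rate_matrix_def\<close>)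
    show "\<And>z. z \<in> Y - {x} \<Longrightarrow> 0 \<le> q x z * \<pi> x"
      using rate True pi_nn by (auto simp: is_rate_matrix_def)
  qed
  also have "\<dots> < \<infinity>" by simp
  finally show ?thesis .
qed


lemma R_shift: "Rf (x + s) + (\<Sum>\<^sub>\<infinity>\<omega>\<in>Op. h \<omega> (x - \<omega>)) = (\<Sum>\<^sub>\<infinity>\<omega>\<in>Op. h \<omega> x) + Rf x"
proof -
  have per: "(\<Sum>\<^sub>\<infinity>j\<in>{1..\<omega> div s}. h \<omega> (x + s - j * s)) + h \<omega> (x - \<omega>)
      = h \<omega> x + (\<Sum>\<^sub>\<infinity>j\<in>{1..\<omega> div s}. h \<omega> (x - j * s))" if w: "\<omega> \<in> Op" for \<omega>
  proof -
    have wO: "\<omega> \<in> Om" "\<omega> > 0" using w by (auto simp: Omega_plus_def)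
    have k: "\<omega> div s \<ge> 0" using wO s_pos by (simp add: pos_imp_zdiv_nonneg_iff)
    have ek: "x - \<omega> div s * s = x - \<omega>" "x - s * (\<omega> div s) = x - \<omega>" using div_mult[OF wO(1)] by (simp_all add: mult.commute)
    have "(\<Sum>j\<in>{0+1..\<omega> div s}. (\<lambda>j. h \<omega> (x - j * s)) (j - 1)) + (\<lambda>j. h \<omega> (x - j * s)) (\<omega> div s)
        = (\<lambda>j. h \<omega> (x - j * s)) 0 + (\<Sum>j\<in>{0+1..\<omega> div s}. (\<lambda>j. h \<omega> (x - j * s)) j)"
      by (rule shift_sum) (use k in simp)
    then show ?thesis by (simp add: ek algebra_simps)
  qed
  have "Rf (x + s) + (\<Sum>\<^sub>\<infinity>\<omega>\<in>Op. h \<omega> (x - \<omega>))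
      = (\<Sum>\<^sub>\<infinity>\<omega>\<in>Op. (\<Sum>\<^sub>\<infinity>j\<in>{1..\<omega> div s}. h \<omega> (x + s - j * s)) + h \<omega> (x - \<omega>))"
    unfolding Rf_def by (subst infsum_add) (auto simp: ennreal_summ algebra_simps)
  also have "\<dots> = (\<Sum>\<^sub>\<infinity>\<omega>\<in>Op. h \<omega> x + (\<Sum>\<^sub>\<infinity>j\<in>{1..\<omega> div s}. h \<omega> (x - j * s)))"
    by (rule infsum_cong) (rule per)
  also have "\<dots> = (\<Sum>\<^sub>\<infinity>\<omega>\<in>Op. h \<omega> x) + Rf x"
    unfolding Rf_def by (subst infsum_add) (auto simp: ennreal_summ)
  finally show ?thesis .
qed

lemma L_shift: "Lf (x + s) + (\<Sum>\<^sub>\<infinity>\<omega>\<in>Omm. h \<omega> x) = (\<Sum>\<^sub>\<infinity>\<omega>\<in>Omm. h \<omega> (x - \<omega>)) + Lf x"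
proof -
  have per: "(\<Sum>\<^sub>\<infinity>j\<in>{\<omega> div s + 1..0}. h \<omega> (x + s - j * s)) + h \<omega> x
      = h \<omega> (x - \<omega>) + (\<Sum>\<^sub>\<infinity>j\<in>{\<omega> div s + 1..0}. h \<omega> (x - j * s))" if w: "\<omega> \<in> Omm" for \<omega>
  proof -
    have wO: "\<omega> \<in> Om" "\<omega> < 0" using w by (auto simp: Omega_minus_def)
    have k: "\<omega> div s \<le> 0" using wO s_pos by (simp add: div_nonpos_pos_le0)
    have ek: "x - \<omega> div s * s = x - \<omega>" "x - s * (\<omega> div s) = x - \<omega>" using div_mult[OF wO(1)] by (simp_all add: mult.commute)
    have "(\<Sum>j\<in>{\<omega> div s+1..0}. (\<lambda>j. h \<omega> (x - j * s)) (j - 1)) + (\<lambda>j. h \<omega> (x - j * s)) 0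
        = (\<lambda>j. h \<omega> (x - j * s)) (\<omega> div s) + (\<Sum>j\<in>{\<omega> div s+1..0}. (\<lambda>j. h \<omega> (x - j * s)) j)"
      by (rule shift_sum) (use k in simp)
    then show ?thesis by (simp add: ek algebra_simps)
  qed
  have "Lf (x + s) + (\<Sum>\<^sub>\<infinity>\<omega>\<in>Omm. h \<omega> x)
      = (\<Sum>\<^sub>\<infinity>\<omega>\<in>Omm. (\<Sum>\<^sub>\<infinity>j\<in>{\<omega> div s + 1..0}. h \<omega> (x + s - j * s)) + h \<omega> x)"
    unfolding Lf_def by (subst infsum_add) (auto simp: ennreal_summ algebra_simps)
  also have "\<dots> = (\<Sum>\<^sub>\<infinity>\<omega>\<in>Omm. h \<omega> (x - \<omega>) + (\<Sum>\<^sub>\<infinity>j\<in>{\<omega> div s + 1..0}. h \<omega> (x - j * s)))"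
    by (rule infsum_cong) (rule per)
  also have "\<dots> = (\<Sum>\<^sub>\<infinity>\<omega>\<in>Omm. h \<omega> (x - \<omega>)) + Lf x"
    unfolding Lf_def by (subst infsum_add) (auto simp: ennreal_summ)
  finally show ?thesis .
qed

lemma base: assumes "x < s" shows "Rf x = 0" "Lf x = 0"
proof -
  show "Rf x = 0" unfolding Rf_def
  proof (intro infsum_0)
    fix \<omega> j assume "j \<in> {1..\<omega> div s}"
    then have "j * s \<ge> 1 * s" using s_pos by (intro mult_right_mono) auto
    then have "x - j * s < 0" using assms by simp
    then show "h \<omega> (x - j * s) = 0" by (intro h_zero) (simp add: neg_notin)
  qed
  show "Lf x = 0" unfolding Lf_def
  proof (intro infsum_0)
    fix \<omega> j assume w: "\<omega> \<in> Omm" and j: "j \<in> {\<omega> div s + 1..0}"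
    have wO: "\<omega> \<in> Om" using w by (auto simp: Omega_minus_def)
    have "(j - \<omega> div s) * s \<ge> 1 * s" using s_pos j by (intro mult_right_mono) auto
    then have "x - j * s + \<omega> < 0" using assms div_mult[OF wO] by (simp add: algebra_simps)
    then show "h \<omega> (x - j * s) = 0" by (intro h_zero) (simp add: neg_notin)
  qed
qed


lemma split_in: "Inf_in x = (\<Sum>\<^sub>\<infinity>\<omega>\<in>Op. h \<omega> (x - \<omega>)) + (\<Sum>\<^sub>\<infinity>\<omega>\<in>Omm. h \<omega> (x - \<omega>))"
  unfolding Inf_in_def by (subst Omega_split(1), rule infsum_Un_disjoint) (auto simp: ennreal_summ Omega_split(2))

lemma split_out: "Outf x = (\<Sum>\<^sub>\<infinity>\<omega>\<in>Op. h \<omega> x) + (\<Sum>\<^sub>\<infinity>\<omega>\<in>Omm. h \<omega> x)"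
  unfolding Outf_def by (subst Omega_split(1), rule infsum_Un_disjoint) (auto simp: ennreal_summ Omega_split(2))

lemma step:
  assumes P: "Lf y = Rf y" "Rf y < \<infinity>" and M: "Inf_in y = Outf y"
  shows "Lf (y + s) = Rf (y + s) \<and> Rf (y + s) < \<infinity>"
proof -
  define a where "a = (\<Sum>\<^sub>\<infinity>\<omega>\<in>Op. h \<omega> (y - \<omega>))"
  define b where "b = (\<Sum>\<^sub>\<infinity>\<omega>\<in>Omm. h \<omega> (y - \<omega>))"
  define c where "c = (\<Sum>\<^sub>\<infinity>\<omega>\<in>Op. h \<omega> y)"
  define d where "d = (\<Sum>\<^sub>\<infinity>\<omega>\<in>Omm. h \<omega> y)"
  have m: "a + b = c + d" using M split_in[of y] split_out[of y] unfolding a_def b_def c_def d_def by simp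
  have fin: "c + d < \<infinity>" using Out_fin[of y] split_out[of y] unfolding c_def d_def by simp
  have r: "Rf (y + s) + a = c + Rf y" using R_shift[of y] unfolding a_def c_def .
  have l: "Lf (y + s) + d = b + Rf y" using L_shift[of y] P(1) unfolding b_def d_def by simp
  have cfin: "c < \<infinity>" "d < \<infinity>" using fin by (auto simp: less_top[symmetric] ennreal_add_eq_top)
  have "a + b < \<infinity>" using fin m by simp
  then have afin: "a < \<infinity>" by (auto simp: less_top[symmetric] ennreal_add_eq_top)
  have "Rf (y + s) \<le> Rf (y + s) + a" by simp
  also have "\<dots> = c + Rf y" using r .
  also have "\<dots> < \<infinity>" using cfin P(2) by (auto simp: less_top[symmetric] ennreal_add_eq_top)
  finally have R'fin: "Rf (y + s) < \<infinity>" .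
  have "(a + d) + Lf (y + s) = a + (b + Rf y)" using l by (simp add: add_ac)
  also have "\<dots> = (c + Rf y) + d" using m by (simp add: add_ac)
  also have "\<dots> = (a + d) + Rf (y + s)" using r by (simp add: add_ac)
  finally have "(a + d) + Lf (y + s) = (a + d) + Rf (y + s)" .
  moreover have "a + d \<noteq> \<infinity>" using afin cfin by (simp add: less_top)
  ultimately have "Lf (y + s) = Rf (y + s)" by (simp add: ennreal_add_left_cancel)
  with R'fin show ?thesis by simp
qed

lemma fwd:
  assumes M: "\<forall>x. Inf_in x = Outf x"
  shows "Lf x = Rf x \<and> Rf x < \<infinity>"
proof -
  have "\<forall>x. x < s + int n * s \<longrightarrow> Lf x = Rf x \<and> Rf x < \<infinity>" for n
  proof (induction n)
    case 0
    then show ?case using base by simp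
  next
    case (Suc n)
    show ?case
    proof (intro allI impI)
      fix x assume x: "x < s + int (Suc n) * s"
      show "Lf x = Rf x \<and> Rf x < \<infinity>"
      proof (cases "x < s + int n * s")
        case True then show ?thesis using Suc.IH by blast
      next
        case False
        have "x - s < s + int n * s" using x by (simp add: algebra_simps)
        then have "Lf (x - s) = Rf (x - s) \<and> Rf (x - s) < \<infinity>" using Suc.IH by blast
        then have "Lf (x - s + s) = Rf (x - s + s) \<and> Rf (x - s + s) < \<infinity>"
          using step M by blast
        then show ?thesis by simp
      qed
    qed
  qed
  moreover have "x < s + int (nat x) * s"
  proof (cases "x < 0")
    case True
    have "x < 0" by fact
    also have "0 < s + int (nat x) * s" using s_pos True by simp
    finally show ?thesis .
  next
    case False
    then have "x * s \<ge> x * 1" using s_pos by (intro mult_left_mono) auto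
    then show ?thesis using s_pos False by simp
  qed
  ultimately show ?thesis by blast
qed

lemma bwd:
  assumes C: "\<forall>x\<ge>0. Lf x = Rf x \<and> Rf x < \<infinity>"
  shows "Inf_in x = Outf x"
proof -
  have P: "Lf y = Rf y \<and> Rf y < \<infinity>" for y
  proof (cases "y \<ge> 0")
    case True then show ?thesis using C by blast
  next
    case False then have "y < s" using s_pos by simp
    then show ?thesis using base by simp
  qed
  define a where "a = (\<Sum>\<^sub>\<infinity>\<omega>\<in>Op. h \<omega> (x - \<omega>))"
  define b where "b = (\<Sum>\<^sub>\<infinity>\<omega>\<in>Omm. h \<omega> (x - \<omega>))"
  define c where "c = (\<Sum>\<^sub>\<infinity>\<omega>\<in>Op. h \<omega> x)"
  define d where "d = (\<Sum>\<^sub>\<infinity>\<omega>\<in>Omm. h \<omega> x)"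
  have r: "Rf (x + s) + a = c + Rf x" using R_shift[of x] unfolding a_def c_def .
  have l: "Rf (x + s) + d = b + Rf x" using L_shift[of x] P[of x] P[of "x+s"] unfolding b_def d_def by simp
  have "Rf (x + s) + (a + b) = (c + Rf x) + b" using r by (simp add: add_ac)
  also have "\<dots> = c + (Rf (x + s) + d)" using l by (simp add: add_ac)
  also have "\<dots> = Rf (x + s) + (c + d)" by (simp add: add_ac)
  finally have "Rf (x + s) + (a + b) = Rf (x + s) + (c + d)" .
  moreover have "Rf (x + s) < \<infinity>" using P[of "x+s"] by simp
  then have "Rf (x + s) \<noteq> \<infinity>" by (rule less_imp_neq)
  ultimately have "a + b = c + d" by (simp add: ennreal_add_left_cancel)
  then show ?thesis using split_in[of x] split_out[of x] unfolding a_def b_def c_def d_def by simp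
qed

lemma main12: "stationary_measure Y q \<pi> \<longleftrightarrow> cond2 Y q \<pi>"
  unfolding stat_iff cond2_iff using fwd bwd by blast


lemma ratio: "\<omega> \<in> Om \<Longrightarrow> (of_int \<omega> / of_int s :: real) = of_int (\<omega> div s)"
proof -
  assume w: "\<omega> \<in> Om"
  have "(of_int \<omega> :: real) = of_int (\<omega> div s) * of_int s" using div_mult[OF w] by (metis of_int_mult)
  then show ?thesis using s_pos by simp
qed

lemma h_mult: "ennreal (\<pi> y) * ennreal (lam Y q \<omega> y) = h \<omega> y"
  unfolding h_def using pi_nn[of y] by (metis ennreal_mult' mult.commute)

definition "R3 x = (\<Sum>\<^sub>\<infinity>j\<in>{j::int. 1 \<le> j \<and> ereal (of_int j) \<le> omega_plus Y q}.
      ennreal (\<pi> (x - j * s)) * (\<Sum>\<^sub>\<infinity>\<omega>\<in>A_set Y q j. ennreal (lam Y q \<omega> (x - j * s))))"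
definition "L3 x = (\<Sum>\<^sub>\<infinity>j\<in>{j::int. omega_minus Y q < ereal (of_int j) \<and> j \<le> 0}.
      ennreal (\<pi> (x - j * s)) * (\<Sum>\<^sub>\<infinity>\<omega>\<in>A_set Y q j. ennreal (lam Y q \<omega> (x - j * s))))"

lemma cond3_iff: "cond3 Y q \<pi> \<longleftrightarrow> (\<forall>x\<ge>0. L3 x = R3 x \<and> R3 x < \<infinity>)"
  unfolding cond3_def Let_def L3_def R3_def by simp

lemma R3_eq: "R3 x = Rf x"
proof -
  let ?J = "{j::int. 1 \<le> j \<and> ereal (of_int j) \<le> omega_plus Y q}"
  have s1: "ennreal (\<pi> (x - j * s)) * (\<Sum>\<^sub>\<infinity>\<omega>\<in>A_set Y q j. ennreal (lam Y q \<omega> (x - j * s)))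
      = (\<Sum>\<^sub>\<infinity>\<omega>\<in>Op. if j * s \<le> \<omega> then h \<omega> (x - j * s) else 0)" if j: "j \<in> ?J" for j
  proof -
    have "ennreal (\<pi> (x - j * s)) * (\<Sum>\<^sub>\<infinity>\<omega>\<in>A_set Y q j. ennreal (lam Y q \<omega> (x - j * s)))
        = (\<Sum>\<^sub>\<infinity>\<omega>\<in>A_set Y q j. ennreal (\<pi> (x - j * s)) * ennreal (lam Y q \<omega> (x - j * s)))"
      by (rule ennreal_infsum_cmult[symmetric]) simp
    also have "\<dots> = (\<Sum>\<^sub>\<infinity>\<omega>\<in>A_set Y q j. h \<omega> (x - j * s))" by (simp add: h_mult)
    also have "\<dots> = (\<Sum>\<^sub>\<infinity>\<omega>\<in>Op. if j * s \<le> \<omega> then h \<omega> (x - j * s) else 0)"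
      by (rule infsum_cong_neutral) (use j in \<open>auto simp: A_set_def\<close>)
    finally show ?thesis .
  qed
  have s3: "(\<Sum>\<^sub>\<infinity>j\<in>?J. if j * s \<le> \<omega> then h \<omega> (x - j * s) else 0)
      = (\<Sum>\<^sub>\<infinity>j\<in>{1..\<omega> div s}. h \<omega> (x - j * s))" if w: "\<omega> \<in> Op" for \<omega>
  proof -
    have wO: "\<omega> \<in> Om" using w by (auto simp: Omega_plus_def)
    have le: "j * s \<le> \<omega> \<longleftrightarrow> j \<le> \<omega> div s" for j
    proof -
      have "j * s \<le> \<omega> \<longleftrightarrow> j * s \<le> \<omega> div s * s" using div_mult[OF wO] by simp
      also have "\<dots> \<longleftrightarrow> j \<le> \<omega> div s" using s_pos by simp
      finally show ?thesis .
    qed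
    have sub: "j \<in> ?J" if "j \<in> {1..\<omega> div s}" for j
    proof -
      have "ereal (of_int j) \<le> ereal (of_int (\<omega> div s))" using that by simp
      also have "\<dots> = ereal (of_int \<omega> / of_int s)" using ratio[OF wO] by simp
      also have "\<dots> \<le> omega_plus Y q" unfolding omega_plus_def using w by (rule SUP_upper)
      finally show ?thesis using that by simp
    qed
    show ?thesis
      by (rule infsum_cong_neutral) (use sub le in auto)
  qed
  have "R3 x = (\<Sum>\<^sub>\<infinity>j\<in>?J. \<Sum>\<^sub>\<infinity>\<omega>\<in>Op. if j * s \<le> \<omega> then h \<omega> (x - j * s) else 0)"
    unfolding R3_def by (rule infsum_cong) (rule s1)
  also have "\<dots> = (\<Sum>\<^sub>\<infinity>\<omega>\<in>Op. \<Sum>\<^sub>\<infinity>j\<in>?J. if j * s \<le> \<omega> then h \<omega> (x - j * s) else 0)"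
    by (rule ennreal_infsum_swap)
  also have "\<dots> = Rf x" unfolding Rf_def by (rule infsum_cong) (rule s3)
  finally show ?thesis .
qed

lemma L3_eq: "L3 x = Lf x"
proof -
  let ?J = "{j::int. omega_minus Y q < ereal (of_int j) \<and> j \<le> 0}"
  have s1: "ennreal (\<pi> (x - j * s)) * (\<Sum>\<^sub>\<infinity>\<omega>\<in>A_set Y q j. ennreal (lam Y q \<omega> (x - j * s)))
      = (\<Sum>\<^sub>\<infinity>\<omega>\<in>Omm. if \<omega> < j * s then h \<omega> (x - j * s) else 0)" if j: "j \<in> ?J" for j
  proof -
    have "ennreal (\<pi> (x - j * s)) * (\<Sum>\<^sub>\<infinity>\<omega>\<in>A_set Y q j. ennreal (lam Y q \<omega> (x - j * s)))
        = (\<Sum>\<^sub>\<infinity>\<omega>\<in>A_set Y q j. ennreal (\<pi> (x - j * s)) * ennreal (lam Y q \<omega> (x - j * s)))"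
      by (rule ennreal_infsum_cmult[symmetric]) simp
    also have "\<dots> = (\<Sum>\<^sub>\<infinity>\<omega>\<in>A_set Y q j. h \<omega> (x - j * s))" by (simp add: h_mult)
    also have "\<dots> = (\<Sum>\<^sub>\<infinity>\<omega>\<in>Omm. if \<omega> < j * s then h \<omega> (x - j * s) else 0)"
      by (rule infsum_cong_neutral) (use j in \<open>auto simp: A_set_def\<close>)
    finally show ?thesis .
  qed
  have s3: "(\<Sum>\<^sub>\<infinity>j\<in>?J. if \<omega> < j * s then h \<omega> (x - j * s) else 0)
      = (\<Sum>\<^sub>\<infinity>j\<in>{\<omega> div s + 1..0}. h \<omega> (x - j * s))" if w: "\<omega> \<in> Omm" for \<omega>
  proof -
    have wO: "\<omega> \<in> Om" using w by (auto simp: Omega_minus_def)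
    have le: "\<omega> < j * s \<longleftrightarrow> \<omega> div s < j" for j
    proof -
      have "\<omega> < j * s \<longleftrightarrow> \<omega> div s * s < j * s" using div_mult[OF wO] by simp
      also have "\<dots> \<longleftrightarrow> \<omega> div s < j" using s_pos by simp
      finally show ?thesis .
    qed
    have sub: "j \<in> ?J" if "j \<in> {\<omega> div s + 1..0}" for j
    proof -
      have "omega_minus Y q \<le> ereal (of_int \<omega> / of_int s)" unfolding omega_minus_def using w by (rule INF_lower)
      also have "\<dots> = ereal (of_int (\<omega> div s))" using ratio[OF wO] by simp
      also have "\<dots> < ereal (of_int j)" using that by simp
      finally show ?thesis using that by simp
    qed
    show ?thesis
      by (rule infsum_cong_neutral) (use sub le in auto)
  qed
  have "L3 x = (\<Sum>\<^sub>\<infinity>j\<in>?J. \<Sum>\<^sub>\<infinity>\<omega>\<in>Omm. if \<omega> < j * s then h \<omega> (x - j * s) else 0)"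
    unfolding L3_def by (rule infsum_cong) (rule s1)
  also have "\<dots> = (\<Sum>\<^sub>\<infinity>\<omega>\<in>Omm. \<Sum>\<^sub>\<infinity>j\<in>?J. if \<omega> < j * s then h \<omega> (x - j * s) else 0)"
    by (rule ennreal_infsum_swap)
  also have "\<dots> = Lf x" unfolding Lf_def by (rule infsum_cong) (rule s3)
  finally show ?thesis .
qed

lemma main23: "cond2 Y q \<pi> \<longleftrightarrow> cond3 Y q \<pi>"
  unfolding cond2_iff cond3_iff R3_eq L3_eq ..

end

theorem theorem3p2:
  fixes Y :: "int set" and q :: "int \<Rightarrow> int \<Rightarrow> real" and \<pi> :: "int \<Rightarrow> real"
  assumes "Y \<subseteq> {0..}"
    and "is_rate_matrix Y q"
    and "Omega Y q \<noteq> {}"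
    and "\<forall>x. x \<notin> Y \<longrightarrow> \<pi> x = 0"
  shows "(stationary_measure Y q \<pi> \<longleftrightarrow> nonneg_measure_on Y \<pi> \<and> cond2 Y q \<pi>)
       \<and> (nonneg_measure_on Y \<pi> \<and> cond2 Y q \<pi> \<longleftrightarrow> nonneg_measure_on Y \<pi> \<and> cond3 Y q \<pi>)
       \<and> (stationary_distribution Y q \<pi> \<longleftrightarrow> prob_on Y \<pi> \<and> cond2 Y q \<pi>)
       \<and> (prob_on Y \<pi> \<and> cond2 Y q \<pi> \<longleftrightarrow> prob_on Y \<pi> \<and> cond3 Y q \<pi>)"
proof -
  have A: "stationary_measure Y q \<pi> \<longleftrightarrow> cond2 Y q \<pi>" and B: "cond2 Y q \<pi> \<longleftrightarrow> cond3 Y q \<pi>"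
    if nn: "nonneg_measure_on Y \<pi>"
  proof -
    interpret mc Y q \<pi> using assms(1-3) nn by unfold_locales
    show "stationary_measure Y q \<pi> \<longleftrightarrow> cond2 Y q \<pi>" by (rule main12)
    show "cond2 Y q \<pi> \<longleftrightarrow> cond3 Y q \<pi>" by (rule main23)
  qed
  have sn: "stationary_measure Y q \<pi> \<Longrightarrow> nonneg_measure_on Y \<pi>"
    by (simp add: stationary_measure_def)
  have pn: "prob_on Y \<pi> \<Longrightarrow> nonneg_measure_on Y \<pi>" by (simp add: prob_on_def)
  show ?thesis
    using A B sn pn unfolding stationary_distribution_def by blast
qed

end
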